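(* Let $\mathbb{F}$ be a field of characteristic zero, $d\ge 2$, $n\ge 0$, and let $a_{k,j}\in\mathbb{F}$ ($2\le k\le n$, $2\le j\le d$). Let $L_0,\dots,L_n$ be defined by $L_0=1$, $L_1=x_1$ and, for $2\le k\le n$, $$L_k=\Psi_1(M_1)+\sum_{j=2}^d\Psi_j\big((M_j)_{i_1=\dots=i_{j-1}=0}\big)+a_{k,2}x_2+\dots+a_{k,d}x_d,\quad M_1=L_{k-1},\ M_j=\sum_{t=2}^{k-1}a_{t,j}L_{k-t}.$$ Then for every $k=0,1,\dots,n$, $$L_k=\sum\frac{a_{2,2}^{\gamma_{2,2}}\cdots a_{n,2}^{\gamma_{2,n}}\cdots a_{2,d}^{\gamma_{d,2}}\cdots a_{n,d}^{\gamma_{d,n}}}{\gamma_{1,1}!\,\gamma_{2,2}!\cdots\gamma_{2,n}!\cdots\gamma_{d,2}!\cdots\gamma_{d,n}!}\,x_1^{\gamma_{1,1}}x_2^{\gamma_{2,2}+\dots+\gamma_{2,n}}\cdots x_d^{\gamma_{d,2}+\dots+\gamma_{d,n}},$$ where the sum runs over all nonnegative integers $\gamma_{1,1}$, $\gamma_{s,j}$ ($2\le s\le d$, $2\le j\le n$) with $\gamma_{1,1}+2(\gamma_{2,2}+\dots+\gamma_{d,2})+\dots+n(\gamma_{2,n}+\dots+\gamma_{d,n})=k$.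
   Context: $\Psi_j$ is the linear operator on $\mathbb{F}[x_1,\dots,x_d]$ with $\Psi_j(x_1^{\alpha_1}\cdots x_d^{\alpha_d})=\frac{1}{\alpha_j+1}x_1^{\alpha_1}\cdots x_j^{\alpha_j+1}\cdots x_d^{\alpha_d}$; $(M)_{i_1=\dots=i_{j-1}=0}$ is the sum of the terms of $M$ containing none of $x_1,\dots,x_{j-1}$. Convention: $0^0=1$. *)

theory Defs
  imports Complex_Main
begin

text \<open>Polynomials in x_1,...,x_d are represented by their coefficient functions:
  a polynomial is a map from exponent vectors (nat => nat, variable i has exponent e i)
  to coefficients.  Only linear operations are needed.\<close>

type_synonym 'a mpoly_fn = "(nat \<Rightarrow> nat) \<Rightarrow> 'a"

definition unit_vec :: "nat \<Rightarrow> nat \<Rightarrow> nat" where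
  "unit_vec j = (\<lambda>i. if i = j then 1 else 0)"

definition one_poly :: "'a::field mpoly_fn" where
  "one_poly = (\<lambda>\<alpha>. if \<alpha> = (\<lambda>_. 0) then 1 else 0)"

definition var_poly :: "nat \<Rightarrow> 'a::field mpoly_fn" where
  "var_poly j = (\<lambda>\<alpha>. if \<alpha> = unit_vec j then 1 else 0)"

text \<open>Psi_j(x^beta) = x^(beta + e_j) / (beta_j + 1), extended linearly.\<close>
definition Psi :: "nat \<Rightarrow> 'a::field mpoly_fn \<Rightarrow> 'a mpoly_fn" where
  "Psi j p = (\<lambda>\<alpha>. if 1 \<le> \<alpha> j then p (\<alpha>(j := \<alpha> j - 1)) / of_nat (\<alpha> j) else 0)"

text \<open>(M)_{i_1=...=i_{j-1}=0}: keep the terms not containing x_1,...,x_{j-1}.\<close>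
definition restr :: "nat \<Rightarrow> 'a::field mpoly_fn \<Rightarrow> 'a mpoly_fn" where
  "restr j p = (\<lambda>\<alpha>. if (\<forall>i\<in>{1..<j}. \<alpha> i = 0) then p \<alpha> else 0)"

fun Lpoly :: "(nat \<Rightarrow> nat \<Rightarrow> 'a::field_char_0) \<Rightarrow> nat \<Rightarrow> nat \<Rightarrow> 'a mpoly_fn" where
  "Lpoly a d 0 = one_poly"
| "Lpoly a d (Suc 0) = var_poly 1"
| "Lpoly a d (Suc (Suc m)) =
     (\<lambda>\<alpha>. Psi 1 (Lpoly a d (Suc m)) \<alpha>
        + (\<Sum>j=2..d. Psi j (restr j (\<lambda>\<beta>. \<Sum>t=2..Suc m. a t j * Lpoly a d (Suc (Suc m) - t) \<beta>)) \<alpha>)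
        + (\<Sum>j=2..d. a (Suc (Suc m)) j * var_poly j \<alpha>))"

text \<open>Index set of the sum: gamma_{1,1} = c and gamma_{s,j} = g s j for 2<=s<=d, 2<=j<=n
  (g is zero elsewhere), with weighted sum equal to k.\<close>
definition gammas :: "nat \<Rightarrow> nat \<Rightarrow> nat \<Rightarrow> (nat \<times> (nat \<Rightarrow> nat \<Rightarrow> nat)) set" where
  "gammas d n k = {(c, g). (\<forall>s j. (s \<notin> {2..d} \<or> j \<notin> {2..n}) \<longrightarrow> g s j = 0)
       \<and> c + (\<Sum>j=2..n. j * (\<Sum>s=2..d. g s j)) = k}"

definition gamma_exp :: "nat \<Rightarrow> nat \<Rightarrow> nat \<Rightarrow> (nat \<Rightarrow> nat \<Rightarrow> nat) \<Rightarrow> nat \<Rightarrow> nat" where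
  "gamma_exp d n c g = (\<lambda>i. if i = 1 then c else if 2 \<le> i \<and> i \<le> d then (\<Sum>j=2..n. g i j) else 0)"

definition gamma_coeff :: "(nat \<Rightarrow> nat \<Rightarrow> 'a::field_char_0) \<Rightarrow> nat \<Rightarrow> nat \<Rightarrow> nat \<Rightarrow> (nat \<Rightarrow> nat \<Rightarrow> nat) \<Rightarrow> 'a" where
  "gamma_coeff a d n c g =
     (\<Prod>s=2..d. \<Prod>j=2..n. a j s ^ g s j)
     / (fact c * (\<Prod>s=2..d. \<Prod>j=2..n. fact (g s j)))"

definition closed_form :: "(nat \<Rightarrow> nat \<Rightarrow> 'a::field_char_0) \<Rightarrow> nat \<Rightarrow> nat \<Rightarrow> nat \<Rightarrow> 'a mpoly_fn" where
  "closed_form a d n k = (\<lambda>\<alpha>. \<Sum>(c, g)\<in>gammas d n k.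
       if \<alpha> = gamma_exp d n c g then gamma_coeff a d n c g else 0)"

end

theory Submission imports Defs "HOL-Library.FuncSet" begin

definition Wt :: "nat \<Rightarrow> nat \<Rightarrow> (nat\<Rightarrow>nat\<Rightarrow>nat) \<Rightarrow> nat" where
  "Wt d n g = (\<Sum>j=2..n. j * (\<Sum>s=2..d. g s j))"

lemma gammas_iff: "(c,g) \<in> gammas d n k \<longleftrightarrow>
   (\<forall>s j. (s \<notin> {2..d} \<or> j \<notin> {2..n}) \<longrightarrow> g s j = 0) \<and> c + Wt d n g = k"
  by (simp add: gammas_def Wt_def)

lemma g_le:
  assumes "(c,g) \<in> gammas d n k" "s \<in> {2..d}" "j \<in> {2..n}"
  shows "j * g s j \<le> k"
proof -
  have "g s j \<le> (\<Sum>s'=2..d. g s' j)" using assms(2) by (intro member_le_sum) auto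
  hence "j * g s j \<le> j * (\<Sum>s'=2..d. g s' j)" by simp
  also have "\<dots> \<le> Wt d n g" unfolding Wt_def
    using assms(3) by (intro member_le_sum[where f="\<lambda>j. j * (\<Sum>s'=2..d. g s' j)"]) auto
  also have "\<dots> \<le> k" using assms(1) by (simp add: gammas_iff)
  finally show ?thesis .
qed

lemma fin_gammas: "finite (gammas d n k)"
proof -
  let ?I = "{2..d} \<times> {2..n}"
  let ?h = "\<lambda>f s j. if (s,j) \<in> ?I then f (s,j) else (0::nat)"
  have "gammas d n k \<subseteq> {..k} \<times> (?h ` PiE ?I (\<lambda>_. {..k}))"
  proof
    fix x assume x: "x \<in> gammas d n k"
    obtain c g where xe: "x = (c,g)" by (cases x)
    have c: "c \<le> k" using x xe by (auto simp: gammas_iff)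
    have "g = ?h (restrict (\<lambda>(s,j). g s j) ?I)"
      using x xe by (auto simp: gammas_iff fun_eq_iff restrict_def)
    moreover have "restrict (\<lambda>(s,j). g s j) ?I \<in> PiE ?I (\<lambda>_. {..k})"
    proof -
      { fix s j assume "s \<in> {2..d}" "j \<in> {2..n}"
        hence "j * g s j \<le> k" using g_le x xe by blast
        moreover have "g s j \<le> j * g s j" using \<open>j \<in> {2..n}\<close> by simp
        ultimately have "g s j \<le> k" by linarith }
      thus ?thesis by auto
    qed
    ultimately show "x \<in> {..k} \<times> (?h ` PiE ?I (\<lambda>_. {..k}))" using c xe by blast
  qed
  moreover have "finite ({..k} \<times> (?h ` PiE ?I (\<lambda>_. {..k})))"
    by (intro finite_cartesian_product finite_imageI finite_PiE) auto
  ultimately show ?thesis by (rule finite_subset)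
qed


definition incg :: "(nat\<Rightarrow>nat\<Rightarrow>nat) \<Rightarrow> nat \<Rightarrow> nat \<Rightarrow> nat \<Rightarrow> nat \<Rightarrow> nat" where
  "incg g s t = (\<lambda>x y. g x y + (if x = s \<and> y = t then 1 else 0))"
definition decg :: "(nat\<Rightarrow>nat\<Rightarrow>nat) \<Rightarrow> nat \<Rightarrow> nat \<Rightarrow> nat \<Rightarrow> nat \<Rightarrow> nat" where
  "decg g s t = (\<lambda>x y. g x y - (if x = s \<and> y = t then 1 else 0))"

lemma incg_decg: "1 \<le> g s t \<Longrightarrow> incg (decg g s t) s t = g"
  by (auto simp: incg_def decg_def fun_eq_iff)
lemma decg_incg: "decg (incg g s t) s t = g"
  by (auto simp: incg_def decg_def fun_eq_iff)

lemma prod_ind2: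
  fixes v :: "'a::comm_monoid_mult" and s d t n :: nat
  assumes "s \<in> {2..d}" "t \<in> {2..n}"
  shows "(\<Prod>s'=2..d. \<Prod>j=2..n. if s' = s \<and> j = t then v else 1) = v"
proof -
  have "\<And>s'. (\<Prod>j=2..n. if s' = s \<and> j = t then v else 1) = (if s' = s then v else 1)"
    using assms(2) by (auto simp: prod.delta')
  hence "(\<Prod>s'=2..d. \<Prod>j=2..n. if s' = s \<and> j = t then v else 1) = (\<Prod>s'=2..d. if s' = s then v else 1)"
    by simp
  also have "\<dots> = v" using assms(1) by (simp add: prod.delta')
  finally show ?thesis .
qed

lemma sum_ind_col:
  fixes j t s d :: nat
  assumes "s \<in> {2..d}"
  shows "(\<Sum>s'=2..d. (if s' = s \<and> j = t then 1 else 0::nat)) = (if j = t then 1 else 0)"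
  using assms by (cases "j = t") auto

lemma Wt_inc:
  assumes "s \<in> {2..d}" "t \<in> {2..n}"
  shows "Wt d n (incg g s t) = Wt d n g + t"
proof -
  have "Wt d n (incg g s t) = (\<Sum>j=2..n. j * ((\<Sum>s'=2..d. g s' j) + (if j = t then 1 else 0)))"
    unfolding Wt_def incg_def using assms(1)
    by (simp add: sum.distrib sum_ind_col)
  also have "\<dots> = Wt d n g + (\<Sum>j=2..n. j * (if j = t then 1 else 0))"
    unfolding Wt_def by (simp add: distrib_left sum.distrib)
  also have "(\<Sum>j=2..n. j * (if j = t then 1 else 0)) = t"
    using assms(2) by (simp add: if_distrib cong: if_cong)
  finally show ?thesis .
qed

lemma gexp_inc:
  assumes "s \<in> {2..d}" "t \<in> {2..n}"
  shows "gamma_exp d n c (incg g s t) = (gamma_exp d n c g)(s := gamma_exp d n c g s + 1)"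
  using assms by (auto simp: gamma_exp_def incg_def fun_eq_iff sum.distrib)

definition suppg :: "nat \<Rightarrow> nat \<Rightarrow> (nat\<Rightarrow>nat\<Rightarrow>nat) \<Rightarrow> bool" where
  "suppg d n g = (\<forall>s j. (s \<notin> {2..d} \<or> j \<notin> {2..n}) \<longrightarrow> g s j = 0)"

lemma gammas_iff2: "(c,g) \<in> gammas d n k \<longleftrightarrow> suppg d n g \<and> c + Wt d n g = k"
  by (simp add: gammas_iff suppg_def)

lemma supp_inc: "suppg d n g \<Longrightarrow> s \<in> {2..d} \<Longrightarrow> t \<in> {2..n} \<Longrightarrow> suppg d n (incg g s t)"
  by (auto simp: suppg_def incg_def)
lemma supp_dec: "suppg d n g \<Longrightarrow> suppg d n (decg g s t)"
  by (auto simp: suppg_def decg_def)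

lemma fact_inc: "(fact (g x y + (if x = s \<and> y = t then 1 else 0)) :: 'a::field_char_0)
   = fact (g x y) * (if x = s \<and> y = t then of_nat (g s t + 1) else 1)"
  by (auto simp: algebra_simps)

lemma coeff_inc:
  fixes a :: "nat \<Rightarrow> nat \<Rightarrow> 'a::field_char_0"
  assumes "s \<in> {2..d}" "t \<in> {2..n}"
  shows "of_nat (g s t + 1) * gamma_coeff a d n c (incg g s t) = a t s * gamma_coeff a d n c g"
proof -
  have N: "(\<Prod>s'=2..d. \<Prod>j=2..n. a j s' ^ incg g s t s' j) = a t s * (\<Prod>s'=2..d. \<Prod>j=2..n. a j s' ^ g s' j)"
  proof -
    have "(\<Prod>s'=2..d. \<Prod>j=2..n. a j s' ^ incg g s t s' j) =
          (\<Prod>s'=2..d. \<Prod>j=2..n. a j s' ^ g s' j * (if s' = s \<and> j = t then a t s else 1))"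
      by (intro prod.cong refl) (auto simp: incg_def)
    also have "\<dots> = (\<Prod>s'=2..d. \<Prod>j=2..n. a j s' ^ g s' j) * (\<Prod>s'=2..d. \<Prod>j=2..n. (if s' = s \<and> j = t then a t s else 1))"
      by (simp add: prod.distrib)
    also have "(\<Prod>s'=2..d. \<Prod>j=2..n. (if s' = s \<and> j = t then a t s else 1)) = a t s"
      using assms by (rule prod_ind2)
    finally show ?thesis by simp
  qed
  have F: "(\<Prod>s'=2..d. \<Prod>j=2..n. (fact (incg g s t s' j) :: 'a)) = of_nat (g s t + 1) * (\<Prod>s'=2..d. \<Prod>j=2..n. fact (g s' j))"
  proof -
    have "(\<Prod>s'=2..d. \<Prod>j=2..n. (fact (incg g s t s' j) :: 'a)) =
          (\<Prod>s'=2..d. \<Prod>j=2..n. fact (g s' j) * (if s' = s \<and> j = t then of_nat (g s t + 1) else 1))"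
      unfolding incg_def by (intro prod.cong refl fact_inc)
    also have "\<dots> = (\<Prod>s'=2..d. \<Prod>j=2..n. (fact (g s' j) :: 'a)) * (\<Prod>s'=2..d. \<Prod>j=2..n. (if s' = s \<and> j = t then of_nat (g s t + 1) else 1))"
      by (simp add: prod.distrib)
    also have "(\<Prod>s'=2..d. \<Prod>j=2..n. (if s' = s \<and> j = t then of_nat (g s t + 1) else 1)) = (of_nat (g s t + 1) :: 'a)"
      using assms by (rule prod_ind2)
    finally show ?thesis by simp
  qed
  have nz: "(\<Prod>s'=2..d. \<Prod>j=2..n. (fact (g s' j) :: 'a)) \<noteq> 0" by (simp add: prod_zero_iff)
  have nz2: "(of_nat (g s t + 1) :: 'a) \<noteq> 0" by (metis of_nat_eq_0_iff add_is_0 one_neq_zero)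
  have nz3: "(fact c :: 'a) \<noteq> 0" by simp
  have gen: "\<And>x y F z P::'a. x \<noteq> 0 \<Longrightarrow> y \<noteq> 0 \<Longrightarrow> F \<noteq> 0 \<Longrightarrow> x * (z * P / (y * (x * F))) = z * (P / (y * F))"
    by (simp add: field_simps)
  show ?thesis unfolding gamma_coeff_def N F by (rule gen[OF nz2 nz3 nz])
qed

lemma coeff_suc:
  fixes a :: "nat \<Rightarrow> nat \<Rightarrow> 'a::field_char_0"
  shows "of_nat (Suc c) * gamma_coeff a d n (Suc c) g = gamma_coeff a d n c g"
proof -
  have nz: "(\<Prod>s'=2..d. \<Prod>j=2..n. (fact (g s' j) :: 'a)) \<noteq> 0" by (simp add: prod_zero_iff)
  have nz2: "(of_nat (Suc c) :: 'a) \<noteq> 0" by (metis of_nat_eq_0_iff nat.distinct(1))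
  have fc: "(fact (Suc c) :: 'a) = of_nat (Suc c) * fact c" by (simp only: fact_Suc)
  have gen: "\<And>x y N F::'a. x \<noteq> 0 \<Longrightarrow> x * (N / (x * y * F)) = N / (y * F)"
    by (simp add: field_simps)
  have nz3: "(fact c :: 'a) \<noteq> 0" by simp
  show ?thesis unfolding gamma_coeff_def fc by (rule gen[OF nz2])
qed

lemma cf_alt: "closed_form a d n k \<alpha> =
   (\<Sum>x\<in>{x\<in>gammas d n k. gamma_exp d n (fst x) (snd x) = \<alpha>}. gamma_coeff a d n (fst x) (snd x))"
  unfolding closed_form_def
  by (subst sum.inter_filter[OF fin_gammas], rule sum.cong, auto simp: case_prod_beta')

definition Dv :: "nat \<Rightarrow> 'a::field mpoly_fn \<Rightarrow> 'a mpoly_fn" where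
  "Dv j p = (\<lambda>\<alpha>. of_nat (\<alpha> j + 1) * p (\<alpha>(j := \<alpha> j + 1)))"

lemma gexp_1: "gamma_exp d n c g 1 = c" by (simp add: gamma_exp_def)
lemma gexp_1': "gamma_exp d n c g (Suc 0) = c" by (simp add: gamma_exp_def)

lemma gexp_suc: "gamma_exp d n (Suc c) g = (gamma_exp d n c g)(1 := Suc c)"
  by (auto simp: gamma_exp_def fun_eq_iff)

lemma D1_cf:
  fixes a :: "nat \<Rightarrow> nat \<Rightarrow> 'a::field_char_0"
  shows "Dv 1 (closed_form a d n (Suc m)) \<alpha> = closed_form a d n m \<alpha>"
proof -
  define \<alpha>' where "\<alpha>' = \<alpha>(1 := \<alpha> 1 + 1)"
  define A where "A = {x\<in>gammas d n (Suc m). gamma_exp d n (fst x) (snd x) = \<alpha>'}"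
  define B where "B = {x\<in>gammas d n m. gamma_exp d n (fst x) (snd x) = \<alpha>}"
  define co where "co = (\<lambda>x. gamma_coeff a d n (fst x) (snd x))"
  define f where "f = (\<lambda>x::nat \<times> (nat\<Rightarrow>nat\<Rightarrow>nat). (Suc (fst x), snd x))"
  define f' where "f' = (\<lambda>x::nat \<times> (nat\<Rightarrow>nat\<Rightarrow>nat). (fst x - 1, snd x))"
  have Ac: "\<And>x. x \<in> A \<Longrightarrow> fst x = Suc (\<alpha> 1)"
  proof -
    fix x assume "x \<in> A"
    hence "gamma_exp d n (fst x) (snd x) 1 = \<alpha>' 1" by (simp add: A_def)
    thus "fst x = Suc (\<alpha> 1)" by (simp only: gexp_1 \<alpha>'_def) simp
  qed
  have bij: "bij_betw f B A"
  proof (rule bij_betw_byWitness[where f'=f'])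
    show "\<forall>x\<in>B. f' (f x) = x" by (simp add: f_def f'_def)
    show "\<forall>x\<in>A. f (f' x) = x" using Ac by (auto simp: f_def f'_def)
    show "f ` B \<subseteq> A"
    proof
      fix y assume "y \<in> f ` B"
      then obtain c g where cg: "(c,g) \<in> B" "y = (Suc c, g)" by (auto simp: f_def)
      thus "y \<in> A" unfolding A_def B_def \<alpha>'_def
        by (auto simp: gammas_iff2 gexp_suc gexp_1 gexp_1')
    qed
    show "f' ` A \<subseteq> B"
    proof
      fix y assume "y \<in> f' ` A"
      then obtain c g where cg: "(c,g) \<in> A" "y = (c - 1, g)" by (auto simp: f'_def)
      have c: "c = Suc (\<alpha> 1)" using Ac cg(1) by auto
      have "gamma_exp d n (Suc (\<alpha> 1)) g = \<alpha>'" using cg(1) c by (simp add: A_def)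
      hence h: "(gamma_exp d n (\<alpha> 1) g)(1 := Suc (\<alpha> 1)) = \<alpha>(1 := \<alpha> 1 + 1)"
        unfolding gexp_suc \<alpha>'_def .
      have "gamma_exp d n (\<alpha> 1) g = \<alpha>"
      proof
        fix i show "gamma_exp d n (\<alpha> 1) g i = \<alpha> i"
        proof (cases "i = 1")
          case True thus ?thesis by (simp only: gexp_1)
        next
          case False thus ?thesis using fun_cong[OF h, of i] by simp
        qed
      qed
      thus "y \<in> B" using cg c unfolding A_def B_def
        by (auto simp: gammas_iff2)
    qed
  qed
  have Bc: "\<And>x. x \<in> B \<Longrightarrow> fst x = \<alpha> 1"
  proof -
    fix x assume "x \<in> B"
    hence "gamma_exp d n (fst x) (snd x) 1 = \<alpha> 1" by (simp add: B_def)
    thus "fst x = \<alpha> 1" by (simp only: gexp_1)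
  qed
  have "Dv 1 (closed_form a d n (Suc m)) \<alpha> = of_nat (\<alpha> 1 + 1) * sum co A"
    by (simp add: Dv_def cf_alt A_def \<alpha>'_def co_def)
  also have "sum co A = sum (co \<circ> f) B"
    using bij by (simp add: sum.reindex_bij_betw)
  also have "of_nat (\<alpha> 1 + 1) * sum (co \<circ> f) B = sum co B"
    unfolding sum_distrib_left
  proof (rule sum.cong[OF refl])
    fix x assume "x \<in> B"
    thus "of_nat (\<alpha> 1 + 1) * (co \<circ> f) x = co x"
      using Bc coeff_suc[of "fst x" a d n "snd x"] by (simp add: co_def f_def)
  qed
  also have "sum co B = closed_form a d n m \<alpha>" by (simp add: cf_alt B_def co_def)
  finally show ?thesis .
qed

lemma col_sum_k:
  assumes "(c,g) \<in> gammas d n k" "s \<in> {2..d}" "k \<le> n"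
  shows "(\<Sum>j=2..n. g s j) = (\<Sum>j=2..k. g s j)"
proof (rule sum.mono_neutral_right)
  show "\<forall>j\<in>{2..n} - {2..k}. g s j = 0"
  proof
    fix j assume j: "j \<in> {2..n} - {2..k}"
    have "j * g s j \<le> k" using g_le[OF assms(1) assms(2)] j by auto
    moreover have "k < j" using j by auto
    ultimately show "g s j = 0"
    proof (cases "g s j = 0")
      case False
      hence "j \<le> j * g s j" by simp
      thus ?thesis using \<open>j * g s j \<le> k\<close> \<open>k < j\<close> by linarith
    qed
  qed
qed (use assms in auto)

lemma Ds_cf:
  fixes a :: "nat \<Rightarrow> nat \<Rightarrow> 'a::field_char_0"
  assumes s: "s \<in> {2..d}" and kn: "k \<le> n"
  shows "Dv s (closed_form a d n k) \<alpha> = (\<Sum>t=2..k. a t s * closed_form a d n (k - t) \<alpha>)"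
proof -
  define \<alpha>' where "\<alpha>' = \<alpha>(s := \<alpha> s + 1)"
  define A where "A = {x\<in>gammas d n k. gamma_exp d n (fst x) (snd x) = \<alpha>'}"
  define co where "co = (\<lambda>x. gamma_coeff a d n (fst x) (snd x))"
  define B where "B = {xt \<in> A \<times> {2..k}. 1 \<le> snd (fst xt) s (snd xt)}"
  define Sg where "Sg = Sigma {2..k} (\<lambda>t. {y\<in>gammas d n (k-t). gamma_exp d n (fst y) (snd y) = \<alpha>})"
  have finA: "finite A" using fin_gammas[of d n k] by (simp add: A_def)
  have s1: "s \<noteq> 1" using s by auto
  have step1: "\<And>x. x \<in> A \<Longrightarrow> (of_nat (\<alpha> s + 1) :: 'a) = (\<Sum>t=2..k. of_nat (snd x s t))"
  proof -
    fix x assume x: "x \<in> A"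
    obtain c g where xe: "x = (c,g)" by (cases x)
    have "\<alpha> s + 1 = gamma_exp d n c g s" using x xe by (simp add: A_def \<alpha>'_def)
    also have "\<dots> = (\<Sum>j=2..n. g s j)" using s by (simp add: gamma_exp_def)
    also have "\<dots> = (\<Sum>j=2..k. g s j)" using col_sum_k[of c g d n k s] x xe s kn by (simp add: A_def)
    finally have e: "\<alpha> s + 1 = (\<Sum>j=2..k. g s j)" .
    have "(of_nat (\<alpha> s + 1) :: 'a) = of_nat (\<Sum>j=2..k. g s j)" by (simp only: e)
    also have "\<dots> = (\<Sum>t=2..k. of_nat (g s t))" by (rule of_nat_sum)
    finally show "(of_nat (\<alpha> s + 1) :: 'a) = (\<Sum>t=2..k. of_nat (snd x s t))" using xe by simp
  qed
  have "Dv s (closed_form a d n k) \<alpha> = of_nat (\<alpha> s + 1) * sum co A"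
    by (simp add: Dv_def cf_alt A_def \<alpha>'_def co_def)
  also have "\<dots> = (\<Sum>x\<in>A. \<Sum>t=2..k. of_nat (snd x s t) * co x)"
    unfolding sum_distrib_left
  proof (rule sum.cong[OF refl])
    fix x assume "x \<in> A"
    show "of_nat (\<alpha> s + 1) * co x = (\<Sum>t=2..k. of_nat (snd x s t) * co x)"
      by (simp only: step1[OF \<open>x \<in> A\<close>] sum_distrib_right)
  qed
  also have "\<dots> = (\<Sum>(x,t)\<in>A \<times> {2..k}. of_nat (snd x s t) * co x)"
    by (simp add: sum.cartesian_product)
  also have "\<dots> = (\<Sum>(x,t)\<in>B. of_nat (snd x s t) * co x)"
    by (rule sum.mono_neutral_right) (use finA in \<open>auto simp: B_def\<close>)
  also have "\<dots> = (\<Sum>(t,y)\<in>Sg. a t s * co y)"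
  proof -
    define f where "f = (\<lambda>(t::nat, y::nat \<times> (nat\<Rightarrow>nat\<Rightarrow>nat)). ((fst y, incg (snd y) s t), t))"
    define f' where "f' = (\<lambda>(x::nat \<times> (nat\<Rightarrow>nat\<Rightarrow>nat), t::nat). (t, (fst x, decg (snd x) s t)))"
    have bij: "bij_betw f Sg B"
    proof (rule bij_betw_byWitness[where f'=f'])
      show "\<forall>x\<in>Sg. f' (f x) = x" by (auto simp: f_def f'_def decg_incg)
      show "\<forall>x\<in>B. f (f' x) = x" by (auto simp: f_def f'_def B_def incg_decg)
      show "f ` Sg \<subseteq> B"
      proof
        fix z assume "z \<in> f ` Sg"
        then obtain t c g where tcg: "t \<in> {2..k}" "(c,g) \<in> gammas d n (k-t)"
          "gamma_exp d n c g = \<alpha>" "z = ((c, incg g s t), t)"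
          by (auto simp: f_def Sg_def)
        have t: "t \<in> {2..n}" using tcg(1) kn by auto
        have "(c, incg g s t) \<in> gammas d n k"
          using tcg(1,2) Wt_inc[OF s t, of g] supp_inc[OF _ s t, of g] by (auto simp: gammas_iff2)
        moreover have "gamma_exp d n c (incg g s t) = \<alpha>'"
          using gexp_inc[OF s t] tcg(3) by (simp add: \<alpha>'_def)
        ultimately show "z \<in> B" using tcg by (auto simp: B_def A_def incg_def)
      qed
      show "f' ` B \<subseteq> Sg"
      proof
        fix z assume "z \<in> f' ` B"
        then obtain t c g where tcg: "t \<in> {2..k}" "(c,g) \<in> gammas d n k"
          "gamma_exp d n c g = \<alpha>'" "1 \<le> g s t" "z = (t, (c, decg g s t))"
          by (auto simp: f'_def B_def A_def)
        have t: "t \<in> {2..n}" using tcg(1) kn by auto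
        have ID: "incg (decg g s t) s t = g" using incg_decg[of g s t, OF tcg(4)] .
        have "c + Wt d n g = k" using tcg(2) by (simp add: gammas_iff2)
        hence "c + Wt d n (decg g s t) + t = k" using Wt_inc[OF s t, of "decg g s t"] unfolding ID by simp
        hence "(c, decg g s t) \<in> gammas d n (k - t)"
          using tcg(2) supp_dec by (auto simp: gammas_iff2)
        moreover have "gamma_exp d n c (decg g s t) = \<alpha>"
        proof -
          have "(gamma_exp d n c (decg g s t))(s := gamma_exp d n c (decg g s t) s + 1) = \<alpha>(s := \<alpha> s + 1)"
            using gexp_inc[OF s t, of c "decg g s t"] tcg(3) unfolding ID by (simp add: \<alpha>'_def)
          thus ?thesis
          proof -
            assume h: "(gamma_exp d n c (decg g s t))(s := gamma_exp d n c (decg g s t) s + 1) = \<alpha>(s := \<alpha> s + 1)"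
            show ?thesis
            proof
              fix i show "gamma_exp d n c (decg g s t) i = \<alpha> i"
                using fun_cong[OF h, of i] by (cases "i = s") auto
            qed
          qed
        qed
        ultimately show "z \<in> Sg" using tcg by (auto simp: Sg_def)
      qed
    qed
    have "(\<Sum>(x,t)\<in>B. of_nat (snd x s t) * co x) = (\<Sum>z\<in>Sg. (\<lambda>(x,t). of_nat (snd x s t) * co x) (f z))"
      using bij by (simp add: sum.reindex_bij_betw)
    also have "\<dots> = (\<Sum>(t,y)\<in>Sg. a t s * co y)"
    proof (rule sum.cong[OF refl])
      fix z assume z: "z \<in> Sg"
      then obtain t c g where zz: "z = (t,(c,g))" "t \<in> {2..k}" by (auto simp: Sg_def)
      have t: "t \<in> {2..n}" using zz kn by auto
      show "(\<lambda>(x,t). of_nat (snd x s t) * co x) (f z) = (\<lambda>(t,y). a t s * co y) z"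
        using coeff_inc[OF s t, of g a c] zz by (simp add: f_def co_def incg_def add.commute)
    qed
    finally show ?thesis .
  qed
  also have "\<dots> = (\<Sum>t=2..k. \<Sum>y\<in>{y\<in>gammas d n (k-t). gamma_exp d n (fst y) (snd y) = \<alpha>}. a t s * co y)"
    unfolding Sg_def by (rule sum.Sigma[symmetric]) (use fin_gammas in auto)
  also have "\<dots> = (\<Sum>t=2..k. a t s * closed_form a d n (k - t) \<alpha>)"
    by (simp add: cf_alt co_def sum_distrib_left)
  finally show ?thesis .
qed


lemma Psi_zero: "\<alpha> i = 0 \<Longrightarrow> Psi i q \<alpha> = 0"
  by (simp add: Psi_def)

lemma Psi_restr_zero: "i' \<in> {1..<i} \<Longrightarrow> \<alpha> i' \<noteq> 0 \<Longrightarrow> Psi i (restr i q) \<alpha> = 0"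
  by (auto simp: Psi_def restr_def)

lemma Psi_restr_ok: "\<forall>i'\<in>{1..<i}. \<alpha> i' = 0 \<Longrightarrow> Psi i (restr i q) \<alpha> = Psi i q \<alpha>"
  by (auto simp: Psi_def restr_def)

lemma Psi_Dv:
  fixes p :: "'a::field_char_0 mpoly_fn"
  assumes "1 \<le> \<alpha> j" shows "Psi j (Dv j p) \<alpha> = p \<alpha>"
proof -
  have e: "\<alpha>(j := \<alpha> j - 1, j := \<alpha> j - 1 + 1) = \<alpha>" using assms by auto
  have e2: "\<alpha> j - 1 + 1 = \<alpha> j" using assms by simp
  have nz: "(of_nat (\<alpha> j) :: 'a) \<noteq> 0" using assms by simp
  show ?thesis using assms nz unfolding Psi_def Dv_def by (simp add: e e2)
qed

lemma U:
  fixes p :: "'a::field_char_0 mpoly_fn"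
  assumes d1: "1 \<le> d" and supp: "(\<forall>i\<in>{1..d}. \<alpha> i = 0) \<Longrightarrow> p \<alpha> = 0"
  shows "p \<alpha> = Psi 1 (Dv 1 p) \<alpha> + (\<Sum>j=2..d. Psi j (restr j (Dv j p)) \<alpha>)"
proof (cases "\<forall>i\<in>{1..d}. \<alpha> i = 0")
  case True
  have "\<alpha> 1 = 0" using True d1 by auto
  thus ?thesis using supp True by (simp add: Psi_zero)
next
  case False
  define j where "j = (LEAST i. i \<in> {1..d} \<and> \<alpha> i \<noteq> 0)"
  have j: "j \<in> {1..d} \<and> \<alpha> j \<noteq> 0" using False unfolding j_def by (metis (mono_tags, lifting) LeastI)
  have below: "\<And>i. 1 \<le> i \<Longrightarrow> i < j \<Longrightarrow> \<alpha> i = 0"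
  proof -
    fix i assume "1 \<le> i" "i < j"
    hence "\<not> (i \<in> {1..d} \<and> \<alpha> i \<noteq> 0)" unfolding j_def using not_less_Least by blast
    thus "\<alpha> i = 0" using \<open>1 \<le> i\<close> \<open>i < j\<close> j by auto
  qed
  show ?thesis
  proof (cases "j = 1")
    case True
    have a1: "\<alpha> 1 \<noteq> 0" using j True by simp
    have "(\<Sum>j=2..d. Psi j (restr j (Dv j p)) \<alpha>) = 0"
      by (rule sum.neutral) (use a1 in \<open>auto intro!: Psi_restr_zero[of 1]\<close>)
    moreover have "Psi 1 (Dv 1 p) \<alpha> = p \<alpha>" using a1 by (intro Psi_Dv) simp
    ultimately show ?thesis by simp
  next
    case False
    hence j2: "j \<in> {2..d}" using j by auto
    have "Psi 1 (Dv 1 p) \<alpha> = 0" using below[of 1] j2 by (intro Psi_zero) auto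
    moreover have "(\<Sum>i=2..d. Psi i (restr i (Dv i p)) \<alpha>) = Psi j (restr j (Dv j p)) \<alpha>
        + (\<Sum>i\<in>{2..d} - {j}. Psi i (restr i (Dv i p)) \<alpha>)"
      using j2 by (simp add: sum.remove)
    moreover have "Psi j (restr j (Dv j p)) \<alpha> = p \<alpha>"
    proof -
      have "Psi j (restr j (Dv j p)) \<alpha> = Psi j (Dv j p) \<alpha>"
        using below by (intro Psi_restr_ok) auto
      also have "\<dots> = p \<alpha>" using j by (intro Psi_Dv) auto
      finally show ?thesis .
    qed
    moreover have "(\<Sum>i\<in>{2..d} - {j}. Psi i (restr i (Dv i p)) \<alpha>) = 0"
    proof (rule sum.neutral, rule ballI)
      fix i assume i: "i \<in> {2..d} - {j}"
      show "Psi i (restr i (Dv i p)) \<alpha> = 0"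
      proof (cases "i < j")
        case True thus ?thesis using below[of i] i by (intro Psi_zero) auto
      next
        case False thus ?thesis using i j2 j by (intro Psi_restr_zero[of j]) auto
      qed
    qed
    ultimately show ?thesis by simp
  qed
qed

lemma Wt_zero: "(\<forall>s\<in>{2..d}. \<forall>j\<in>{2..n}. g s j = 0) \<Longrightarrow> Wt d n g = 0"
  by (simp add: Wt_def)

lemma cf_vanish:
  assumes "1 \<le> k" "\<forall>i\<in>{1..d}. \<alpha> i = 0" "1 \<le> d"
  shows "closed_form a d n k \<alpha> = 0"
proof -
  have E: "{x\<in>gammas d n k. gamma_exp d n (fst x) (snd x) = \<alpha>} = {}"
  proof (rule ccontr)
    assume "{x\<in>gammas d n k. gamma_exp d n (fst x) (snd x) = \<alpha>} \<noteq> {}"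
    then obtain c g where cg: "(c,g) \<in> gammas d n k" "gamma_exp d n c g = \<alpha>" by auto
    have "\<forall>s\<in>{2..d}. \<forall>j\<in>{2..n}. g s j = 0"
    proof (intro ballI)
      fix s j assume s: "s \<in> {2..d}" and j: "j \<in> {2..n}"
      have "(\<Sum>j=2..n. g s j) = \<alpha> s" using cg(2) s by (auto simp: gamma_exp_def)
      also have "\<alpha> s = 0" using assms(2) s by auto
      finally show "g s j = 0" using j by simp
    qed
    hence "Wt d n g = 0" by (rule Wt_zero)
    moreover have "c = 0"
    proof -
      have "\<alpha> 1 = 0" using assms(2,3) by auto
      thus ?thesis using cg(2) gexp_1[of d n c g] by simp
    qed
    ultimately show False using cg(1) assms(1) by (simp add: gammas_iff2)
  qed
  show ?thesis unfolding cf_alt E by simp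
qed

lemma gammas0: "gammas d n 0 = {(0, \<lambda>_ _. 0)}"
proof
  show "gammas d n 0 \<subseteq> {(0, \<lambda>_ _. 0)}"
  proof
    fix x assume x: "x \<in> gammas d n 0"
    obtain c g where xe: "x = (c,g)" by (cases x)
    have sp: "suppg d n g" and W: "c + Wt d n g = 0" using x xe by (auto simp: gammas_iff2)
    have "\<forall>j\<in>{2..n}. j * (\<Sum>s=2..d. g s j) = 0" using W by (simp add: Wt_def)
    hence h: "\<forall>j\<in>{2..n}. \<forall>s\<in>{2..d}. g s j = 0" by auto
    have "g = (\<lambda>_ _. 0)"
    proof (intro ext)
      fix s j show "g s j = 0"
      proof (cases "s \<in> {2..d} \<and> j \<in> {2..n}")
        case True with h show ?thesis by blast
      next
        case False with sp show ?thesis unfolding suppg_def by blast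
      qed
    qed
    thus "x \<in> {(0, \<lambda>_ _. 0)}" using W xe by simp
  qed
  show "{(0, \<lambda>_ _. 0)} \<subseteq> gammas d n 0" by (simp add: gammas_iff2 suppg_def Wt_def)
qed

lemma cf0: "closed_form a d n 0 = one_poly"
proof -
  have e: "gamma_exp d n 0 (\<lambda>_ _. 0) = (\<lambda>_. 0)" by (auto simp: gamma_exp_def fun_eq_iff)
  have c: "gamma_coeff a d n 0 (\<lambda>_ _. 0) = 1" by (simp add: gamma_coeff_def)
  show ?thesis unfolding closed_form_def gammas0 one_poly_def using e c by (auto simp: fun_eq_iff)
qed

lemma restr_one: "restr j one_poly = one_poly"
  by (auto simp: restr_def one_poly_def fun_eq_iff)

lemma Psi_one: "Psi j one_poly \<alpha> = var_poly j \<alpha>"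
proof (cases "\<alpha> = unit_vec j")
  case True
  thus ?thesis by (simp add: Psi_def one_poly_def var_poly_def unit_vec_def fun_eq_iff)
next
  case False
  have "\<not> (1 \<le> \<alpha> j \<and> \<alpha>(j := \<alpha> j - 1) = (\<lambda>_. 0))"
  proof
    assume h: "1 \<le> \<alpha> j \<and> \<alpha>(j := \<alpha> j - 1) = (\<lambda>_. 0)"
    have "\<alpha> = unit_vec j"
    proof
      fix i
      have hi: "(\<alpha>(j := \<alpha> j - 1)) i = 0" using conjunct2[OF h] by simp
      show "\<alpha> i = unit_vec j i"
      proof (cases "i = j")
        case True thus ?thesis using hi h by (simp add: unit_vec_def)
      next
        case False thus ?thesis using hi by (simp add: unit_vec_def)
      qed
    qed
    thus False using False by simp
  qed
  thus ?thesis using False by (auto simp: Psi_def one_poly_def var_poly_def)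
qed

lemma Psi_lin: "Psi j (restr j (\<lambda>\<beta>. f \<beta> + c * one_poly \<beta>)) \<alpha> = Psi j (restr j f) \<alpha> + c * var_poly j \<alpha>"
proof -
  have "Psi j (restr j (\<lambda>\<beta>. f \<beta> + c * one_poly \<beta>)) \<alpha> = Psi j (restr j f) \<alpha> + c * Psi j (restr j one_poly) \<alpha>"
    by (simp add: Psi_def restr_def add_divide_distrib)
  thus ?thesis by (simp add: restr_one Psi_one)
qed


lemma Psi_restr_0: "Psi j (restr j (\<lambda>\<beta>. 0)) \<alpha> = 0"
  by (simp add: Psi_def restr_def)

lemma cf_rec:
  fixes a :: "nat \<Rightarrow> nat \<Rightarrow> 'a::field_char_0"
  assumes d: "2 \<le> d" and kn: "Suc m \<le> n"
  shows "closed_form a d n (Suc m) \<alpha> = Psi 1 (closed_form a d n m) \<alpha>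
     + (\<Sum>j=2..d. Psi j (restr j (\<lambda>\<beta>. \<Sum>t=2..Suc m. a t j * closed_form a d n (Suc m - t) \<beta>)) \<alpha>)"
proof -
  have "closed_form a d n (Suc m) \<alpha> = Psi 1 (Dv 1 (closed_form a d n (Suc m))) \<alpha>
     + (\<Sum>j=2..d. Psi j (restr j (Dv j (closed_form a d n (Suc m)))) \<alpha>)"
    by (rule U) (use d cf_vanish[of "Suc m" d \<alpha> a n] in auto)
  also have "Dv 1 (closed_form a d n (Suc m)) = closed_form a d n m"
    by (rule ext) (rule D1_cf)
  also have "(\<Sum>j=2..d. Psi j (restr j (Dv j (closed_form a d n (Suc m)))) \<alpha>)
      = (\<Sum>j=2..d. Psi j (restr j (\<lambda>\<beta>. \<Sum>t=2..Suc m. a t j * closed_form a d n (Suc m - t) \<beta>)) \<alpha>)"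
  proof (rule sum.cong[OF refl])
    fix j assume j: "j \<in> {2..d}"
    have "Dv j (closed_form a d n (Suc m)) = (\<lambda>\<beta>. \<Sum>t=2..Suc m. a t j * closed_form a d n (Suc m - t) \<beta>)"
      by (rule ext) (rule Ds_cf[OF j kn])
    thus "Psi j (restr j (Dv j (closed_form a d n (Suc m)))) \<alpha>
       = Psi j (restr j (\<lambda>\<beta>. \<Sum>t=2..Suc m. a t j * closed_form a d n (Suc m - t) \<beta>)) \<alpha>" by simp
  qed
  finally show ?thesis .
qed

theorem corollary6:
  fixes a :: "nat \<Rightarrow> nat \<Rightarrow> 'a::field_char_0" and d n k :: nat
  assumes "2 \<le> d" and "k \<le> n"
  shows "Lpoly a d k = closed_form a d n k"
  using assms(2)
proof (induction k rule: less_induct)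
  case (less k)
  show ?case
  proof (cases k)
    case 0 thus ?thesis by (simp add: cf0)
  next
    case (Suc m)
    note km = Suc
    show ?thesis
    proof (cases m)
      case 0
      show ?thesis
      proof
        fix \<alpha>
        have "closed_form a d n k \<alpha> = Psi 1 (closed_form a d n 0) \<alpha>
          + (\<Sum>j=2..d. Psi j (restr j (\<lambda>\<beta>. \<Sum>t=2..Suc 0. a t j * closed_form a d n (Suc 0 - t) \<beta>)) \<alpha>)"
          using cf_rec[OF assms(1), where m=0 and \<alpha>=\<alpha> and a=a] less.prems km 0 by simp
        also have "\<dots> = var_poly 1 \<alpha>"
          by (simp add: cf0 Psi_one Psi_restr_0)
        finally show "Lpoly a d k \<alpha> = closed_form a d n k \<alpha>" using km 0 by simp
      qed
    next
      case (Suc m')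
      have kk: "k = Suc (Suc m')" using km Suc by simp
      show ?thesis
      proof
        fix \<alpha>
        have IH1: "Lpoly a d (Suc m') = closed_form a d n (Suc m')"
          using less.IH[of "Suc m'"] less.prems kk by simp
        have IH2: "\<And>t. t \<in> {2..Suc m'} \<Longrightarrow> Lpoly a d (Suc (Suc m') - t) = closed_form a d n (Suc (Suc m') - t)"
          using less.IH less.prems kk by auto
        have "Lpoly a d k \<alpha> = Psi 1 (closed_form a d n (Suc m')) \<alpha>
           + (\<Sum>j=2..d. Psi j (restr j (\<lambda>\<beta>. \<Sum>t=2..Suc m'. a t j * closed_form a d n (Suc (Suc m') - t) \<beta>)) \<alpha>)
           + (\<Sum>j=2..d. a (Suc (Suc m')) j * var_poly j \<alpha>)"
        proof -
          have inner: "\<And>j. (\<lambda>\<beta>. \<Sum>t=2..Suc m'. a t j * Lpoly a d (Suc (Suc m') - t) \<beta>)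
              = (\<lambda>\<beta>. \<Sum>t=2..Suc m'. a t j * closed_form a d n (Suc (Suc m') - t) \<beta>)"
            by (intro ext sum.cong refl) (simp add: IH2)
          show ?thesis unfolding kk Lpoly.simps IH1 inner by (rule refl)
        qed
        also have "\<dots> = Psi 1 (closed_form a d n (Suc m')) \<alpha>
           + (\<Sum>j=2..d. Psi j (restr j (\<lambda>\<beta>. (\<Sum>t=2..Suc m'. a t j * closed_form a d n (Suc (Suc m') - t) \<beta>)
               + a (Suc (Suc m')) j * one_poly \<beta>)) \<alpha>)"
          by (simp add: Psi_lin sum.distrib)
        also have "\<dots> = closed_form a d n k \<alpha>"
        proof -
          have e: "\<And>j \<beta>. (\<Sum>t=2..Suc (Suc m'). a t j * closed_form a d n (Suc (Suc m') - t) \<beta>)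
             = (\<Sum>t=2..Suc m'. a t j * closed_form a d n (Suc (Suc m') - t) \<beta>) + a (Suc (Suc m')) j * one_poly \<beta>"
            by (simp add: cf0)
          show ?thesis using cf_rec[OF assms(1), where m="Suc m'" and \<alpha>=\<alpha> and a=a] less.prems kk by (simp only: e)
        qed
        finally show "Lpoly a d k \<alpha> = closed_form a d n k \<alpha>" .
      qed
    qed
  qed
qed

end
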